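(* For every typed DAG task $G=(V,E,\gamma,c)$ and every platform with $M_s\ge 1$ cores of each type $s\in S$, \[ \max_{\pi}\Big(len(\pi)+\sum_{s\in S}\sum_{v\in\mathrm{ivs}(\pi,s)}\frac{c(v)}{M_s}\Big)\;\le\; len(\hat G)+\sum_{s\in S}\frac{vol_s(G)}{M_s}, \] (maximum over paths $\pi$ of $G$), and there exist typed DAG tasks and platforms for which the inequality is strict.
   Context: A typed DAG task is $G=(V,E,\gamma,c)$ where $(V,E)$ is a finite directed acyclic graph with a unique source and a unique sink, $S$ is a finite set of core types, $\gamma:V\to S$ gives the type of each vertex, and $c:V\to\mathbb{R}_{\ge0}$ gives the WCET of each vertex. $vol_s(G)=\sum_{u\in V,\gamma(u)=s}c(u)$; for a path $\pi$, $len(\pi)=\sum_{u\in\pi}c(u)$. The scaled graph $\hat G$ has the same vertices, edges and types as $G$ with weights $\hat c(v)=c(v)(1-1/M_{\gamma(v)})$, and $len(\hat G)$ is its longest path length w.r.t. $\hat c$. $\mathrm{ans}(u)$, $\mathrm{des}(u)$ denote ancestors and descendants of $u$. For $v\in V$, $\mathrm{par}(v)=\{u\in V: u\ne v,\ \gamma(u)=\gamma(v),\ u\notin \mathrm{ans}(v)\cup\mathrm{des}(v)\}$; for a path $\pi=(\tau_1,\dots,\tau_k)$, $\mathrm{ivs}(\pi,s)=\bigcup_{i:\gamma(\tau_i)=s}\mathrm{par}(\tau_i)$. (The left side is the bound NEW-B-2, the right side NEW-B-1; the paper states "NEW-B-2 strictly dominates NEW-B-1".) *)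

theory Defs
  imports Main "HOL.Real"
begin

definition typed_dag :: "'v set \<Rightarrow> ('v \<times> 'v) set \<Rightarrow> 's set \<Rightarrow> ('v \<Rightarrow> 's) \<Rightarrow> ('v \<Rightarrow> real) \<Rightarrow> bool" where
  "typed_dag V E S \<gamma> c \<longleftrightarrow>
     finite V \<and> E \<subseteq> V \<times> V \<and> acyclic E \<and> finite S \<and> \<gamma> ` V \<subseteq> S \<and>
     (\<forall>v\<in>V. c v \<ge> 0) \<and>
     (\<exists>!x. x \<in> V \<and> (\<forall>u. (u, x) \<notin> E)) \<and>
     (\<exists>!x. x \<in> V \<and> (\<forall>u. (x, u) \<notin> E))"

definition is_path :: "'v set \<Rightarrow> ('v \<times> 'v) set \<Rightarrow> 'v list \<Rightarrow> bool" where
  "is_path V E \<pi> \<longleftrightarrow> \<pi> \<noteq> [] \<and> set \<pi> \<subseteq> V \<and>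
     (\<forall>i. Suc i < length \<pi> \<longrightarrow> (\<pi> ! i, \<pi> ! Suc i) \<in> E)"

definition len :: "('v \<Rightarrow> real) \<Rightarrow> 'v list \<Rightarrow> real" where
  "len w \<pi> = (\<Sum>i<length \<pi>. w (\<pi> ! i))"

definition vol :: "'v set \<Rightarrow> ('v \<Rightarrow> 's) \<Rightarrow> ('v \<Rightarrow> real) \<Rightarrow> 's \<Rightarrow> real" where
  "vol V \<gamma> c s = (\<Sum>u\<in>{u\<in>V. \<gamma> u = s}. c u)"

definition ans :: "('v \<times> 'v) set \<Rightarrow> 'v \<Rightarrow> 'v set" where
  "ans E u = {w. (w, u) \<in> E\<^sup>+}"

definition des :: "('v \<times> 'v) set \<Rightarrow> 'v \<Rightarrow> 'v set" where
  "des E u = {w. (u, w) \<in> E\<^sup>+}"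

definition par :: "'v set \<Rightarrow> ('v \<times> 'v) set \<Rightarrow> ('v \<Rightarrow> 's) \<Rightarrow> 'v \<Rightarrow> 'v set" where
  "par V E \<gamma> v = {u\<in>V. u \<noteq> v \<and> \<gamma> u = \<gamma> v \<and> u \<notin> ans E v \<union> des E v}"

definition ivs :: "'v set \<Rightarrow> ('v \<times> 'v) set \<Rightarrow> ('v \<Rightarrow> 's) \<Rightarrow> 'v list \<Rightarrow> 's \<Rightarrow> 'v set" where
  "ivs V E \<gamma> \<pi> s = (\<Union>i\<in>{i. i < length \<pi> \<and> \<gamma> (\<pi> ! i) = s}. par V E \<gamma> (\<pi> ! i))"

text \<open>Scaled weights of G-hat.\<close>
definition chat :: "('v \<Rightarrow> 's) \<Rightarrow> ('v \<Rightarrow> real) \<Rightarrow> ('s \<Rightarrow> nat) \<Rightarrow> 'v \<Rightarrow> real" where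
  "chat \<gamma> c M v = c v * (1 - 1 / real (M (\<gamma> v)))"

definition len_hat :: "'v set \<Rightarrow> ('v \<times> 'v) set \<Rightarrow> ('v \<Rightarrow> 's) \<Rightarrow> ('v \<Rightarrow> real) \<Rightarrow> ('s \<Rightarrow> nat) \<Rightarrow> real" where
  "len_hat V E \<gamma> c M = Max {len (chat \<gamma> c M) \<pi> | \<pi>. is_path V E \<pi>}"

definition new_b2 :: "'v set \<Rightarrow> ('v \<times> 'v) set \<Rightarrow> 's set \<Rightarrow> ('v \<Rightarrow> 's) \<Rightarrow> ('v \<Rightarrow> real) \<Rightarrow> ('s \<Rightarrow> nat) \<Rightarrow> real" where
  "new_b2 V E S \<gamma> c M = Max {len c \<pi> + (\<Sum>s\<in>S. \<Sum>v\<in>ivs V E \<gamma> \<pi> s. c v / real (M s)) | \<pi>. is_path V E \<pi>}"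

definition new_b1 :: "'v set \<Rightarrow> ('v \<times> 'v) set \<Rightarrow> 's set \<Rightarrow> ('v \<Rightarrow> 's) \<Rightarrow> ('v \<Rightarrow> real) \<Rightarrow> ('s \<Rightarrow> nat) \<Rightarrow> real" where
  "new_b1 V E S \<gamma> c M = len_hat V E \<gamma> c M + (\<Sum>s\<in>S. vol V \<gamma> c s / real (M s))"

end

theory Submission
  imports Defs
begin

lemma path_trancl:
  assumes p: "is_path V E \<pi>"
  shows "i < j \<Longrightarrow> j < length \<pi> \<Longrightarrow> (\<pi>!i, \<pi>!j) \<in> E\<^sup>+"
proof (induction j)
  case 0 then show ?case by simp
next
  case (Suc j)
  have e: "(\<pi>!j, \<pi>!Suc j) \<in> E" using p Suc.prems unfolding is_path_def by blast
  show ?case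
  proof (cases "i = j")
    case True then show ?thesis using e by auto
  next
    case False
    then have "(\<pi>!i, \<pi>!j) \<in> E\<^sup>+" using Suc by auto
    then show ?thesis using e by (rule trancl_into_trancl)
  qed
qed

lemma path_distinct:
  assumes p: "is_path V E \<pi>" and a: "acyclic E"
  shows "distinct \<pi>"
proof -
  have "\<pi>!i \<noteq> \<pi>!j" if "i < j" "j < length \<pi>" for i j
  proof
    assume "\<pi>!i = \<pi>!j"
    with path_trancl[OF p that] have "(\<pi>!j, \<pi>!j) \<in> E\<^sup>+" by simp
    with a show False unfolding acyclic_def by blast
  qed
  then show ?thesis unfolding distinct_conv_nth
    by (metis linorder_neqE_nat)
qed

lemma paths_finite:
  assumes "finite V" "acyclic E"
  shows "finite {\<pi>. is_path V E \<pi>}"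
proof (rule finite_subset[OF _ finite_lists_length_le[OF assms(1), of "card V"]])
  show "{\<pi>. is_path V E \<pi>} \<subseteq> {xs. set xs \<subseteq> V \<and> length xs \<le> card V}"
  proof
    fix \<pi> assume "\<pi> \<in> {\<pi>. is_path V E \<pi>}"
    then have p: "is_path V E \<pi>" by simp
    then have s: "set \<pi> \<subseteq> V" unfolding is_path_def by simp
    have "length \<pi> = card (set \<pi>)" using path_distinct[OF p assms(2)] by (simp add: distinct_card)
    also have "\<dots> \<le> card V" using card_mono[OF assms(1) s] .
    finally show "\<pi> \<in> {xs. set xs \<subseteq> V \<and> length xs \<le> card V}" using s by simp
  qed
qed

lemma len_set:
  assumes "distinct \<pi>"
  shows "len w \<pi> = (\<Sum>x\<in>set \<pi>. w x)"
proof -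
  have "set \<pi> = (\<lambda>i. \<pi>!i) ` {..<length \<pi>}" by (auto simp: set_conv_nth)
  moreover have "inj_on (\<lambda>i. \<pi>!i) {..<length \<pi>}" using assms
    by (simp add: inj_on_def nth_eq_iff_index_eq)
  ultimately show ?thesis unfolding len_def by (simp add: sum.reindex)
qed

lemma path_nonempty:
  assumes "typed_dag V E S \<gamma> c" shows "\<exists>\<pi>. is_path V E \<pi>"
proof -
  obtain x where "x \<in> V" using assms unfolding typed_dag_def by blast
  then have "is_path V E [x]" unfolding is_path_def by simp
  then show ?thesis by blast
qed


lemma per_path:
  assumes td: "typed_dag V E S \<gamma> c" and M: "\<forall>s\<in>S. M s \<ge> 1" and p: "is_path V E \<pi>"
  shows "len c \<pi> + (\<Sum>s\<in>S. \<Sum>v\<in>ivs V E \<gamma> \<pi> s. c v / real (M s)) \<le> new_b1 V E S \<gamma> c M"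
proof -
  have fV: "finite V" and ac: "acyclic E" and fS: "finite S" and gS: "\<gamma> ` V \<subseteq> S"
    and cnn: "\<forall>v\<in>V. c v \<ge> 0" using td unfolding typed_dag_def by auto
  have dist: "distinct \<pi>" using path_distinct[OF p ac] .
  define P where "P = set \<pi>"
  have PV: "P \<subseteq> V" using p unfolding is_path_def P_def by simp
  have fP: "finite P" unfolding P_def by simp
  have "len c \<pi> = (\<Sum>x\<in>P. c x)" using len_set[OF dist] P_def by simp
  also have "\<dots> = (\<Sum>x\<in>P. chat \<gamma> c M x) + (\<Sum>x\<in>P. c x / real (M (\<gamma> x)))"
    unfolding chat_def sum.distrib[symmetric] by (rule sum.cong) (auto simp: algebra_simps diff_divide_distrib)
  also have "(\<Sum>x\<in>P. chat \<gamma> c M x) = len (chat \<gamma> c M) \<pi>" using len_set[OF dist] P_def by simp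
  also have "\<dots> \<le> len_hat V E \<gamma> c M" unfolding len_hat_def
    using p paths_finite[OF fV ac] by (intro Max_ge) auto
  also have "(\<Sum>x\<in>P. c x / real (M (\<gamma> x))) = (\<Sum>s\<in>S. \<Sum>x\<in>{x. x \<in> P \<and> \<gamma> x = s}. c x / real (M s))"
  proof -
    have "(\<Sum>x\<in>P. c x / real (M (\<gamma> x))) = (\<Sum>s\<in>S. \<Sum>x\<in>{x. x \<in> P \<and> \<gamma> x = s}. c x / real (M (\<gamma> x)))"
    proof -
      have "\<gamma> ` P \<subseteq> S" using gS PV by blast
      from sum.group[OF fP fS this, of "\<lambda>x. c x / real (M (\<gamma> x))"] show ?thesis by simp
    qed
    also have "\<dots> = (\<Sum>s\<in>S. \<Sum>x\<in>{x. x \<in> P \<and> \<gamma> x = s}. c x / real (M s))"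
      by (intro sum.cong) auto
    finally show ?thesis .
  qed
  finally have L: "len c \<pi> \<le> len_hat V E \<gamma> c M + (\<Sum>s\<in>S. \<Sum>x\<in>{x. x \<in> P \<and> \<gamma> x = s}. c x / real (M s))"
    by simp
  have key: "(\<Sum>x\<in>{x. x \<in> P \<and> \<gamma> x = s}. c x / real (M s)) + (\<Sum>v\<in>ivs V E \<gamma> \<pi> s. c v / real (M s))
      \<le> vol V \<gamma> c s / real (M s)" if sS: "s \<in> S" for s
  proof -
    have Ms: "real (M s) > 0" using M sS by force
    have ivsV: "ivs V E \<gamma> \<pi> s \<subseteq> {u\<in>V. \<gamma> u = s}" unfolding ivs_def par_def by auto
    have fivs: "finite (ivs V E \<gamma> \<pi> s)" using finite_subset[OF ivsV] fV by simp
    have disj: "{x. x \<in> P \<and> \<gamma> x = s} \<inter> ivs V E \<gamma> \<pi> s = {}"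
    proof (rule ccontr)
      assume "{x. x \<in> P \<and> \<gamma> x = s} \<inter> ivs V E \<gamma> \<pi> s \<noteq> {}"
      then obtain v where vP: "v \<in> P" and vi: "v \<in> ivs V E \<gamma> \<pi> s" by blast
      from vi obtain i where i: "i < length \<pi>" and vpar: "v \<in> par V E \<gamma> (\<pi>!i)"
        unfolding ivs_def by auto
      from vP obtain k where k: "k < length \<pi>" "v = \<pi>!k" unfolding P_def by (auto simp: in_set_conv_nth)
      have "k < i \<or> k = i \<or> i < k" by arith
      then show False
      proof (elim disjE)
        assume "k < i" then have "(\<pi>!k, \<pi>!i) \<in> E\<^sup>+" using path_trancl[OF p _ i] by simp
        then show False using vpar k unfolding par_def ans_def by auto
      next
        assume "k = i" then show False using vpar k unfolding par_def by auto
      next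
        assume "i < k" then have "(\<pi>!i, \<pi>!k) \<in> E\<^sup>+" using path_trancl[OF p _ k(1)] by simp
        then show False using vpar k unfolding par_def des_def by auto
      qed
    qed
    have "(\<Sum>x\<in>{x. x \<in> P \<and> \<gamma> x = s}. c x / real (M s)) + (\<Sum>v\<in>ivs V E \<gamma> \<pi> s. c v / real (M s))
       = (\<Sum>x\<in>{x. x \<in> P \<and> \<gamma> x = s} \<union> ivs V E \<gamma> \<pi> s. c x / real (M s))"
      using disj fivs fP by (intro sum.union_disjoint[symmetric]) auto
    also have "\<dots> \<le> (\<Sum>x\<in>{u\<in>V. \<gamma> u = s}. c x / real (M s))"
      using ivsV PV fV cnn Ms by (intro sum_mono2) auto
    also have "\<dots> = vol V \<gamma> c s / real (M s)" unfolding vol_def by (simp add: sum_divide_distrib)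
    finally show ?thesis .
  qed
  have "len c \<pi> + (\<Sum>s\<in>S. \<Sum>v\<in>ivs V E \<gamma> \<pi> s. c v / real (M s)) \<le>
     len_hat V E \<gamma> c M + ((\<Sum>s\<in>S. \<Sum>x\<in>{x. x \<in> P \<and> \<gamma> x = s}. c x / real (M s)) + (\<Sum>s\<in>S. \<Sum>v\<in>ivs V E \<gamma> \<pi> s. c v / real (M s)))"
    using L by simp
  also have "\<dots> \<le> len_hat V E \<gamma> c M + (\<Sum>s\<in>S. vol V \<gamma> c s / real (M s))"
    unfolding sum.distrib[symmetric] using key by (simp add: sum_mono)
  finally show ?thesis unfolding new_b1_def .
qed

lemma part1:
  assumes td: "typed_dag V E S \<gamma> c" and M: "\<forall>s\<in>S. M s \<ge> 1"
  shows "new_b2 V E S \<gamma> c M \<le> new_b1 V E S \<gamma> c M"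
proof -
  have fV: "finite V" and ac: "acyclic E" using td unfolding typed_dag_def by auto
  show ?thesis unfolding new_b2_def
    using paths_finite[OF fV ac] path_nonempty[OF td] per_path[OF td M]
    by (subst Max_le_iff) auto
qed


definition "exV = {0,1,2,3::nat}"
definition "exE = {(0,1),(0,2),(1,3),(2,3::nat)}"
definition "exS = {0,1::nat}"
definition "exg = (\<lambda>v::nat. if v = 2 then 1 else (0::nat))"
definition "exc = (\<lambda>v::nat. if v = 1 \<or> v = 2 then 1 else (0::real))"
definition "exM = (\<lambda>s::nat. 1::nat)"

lemma ex_trancl: "exE\<^sup>+ \<subseteq> {(0,1),(0,2),(0,3),(1,3),(2,3)}"
proof
  fix p assume "p \<in> exE\<^sup>+"
  then obtain a b where ab: "p = (a,b)" "(a,b) \<in> exE\<^sup>+" by (cases p) auto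
  from ab(2) have "(a,b) \<in> {(0,1),(0,2),(0,3),(1,3),(2,3)}"
    by (induction rule: trancl_induct) (auto simp: exE_def)
  then show "p \<in> {(0,1),(0,2),(0,3),(1,3),(2,3)}" using ab by simp
qed

lemma ex_dag: "typed_dag exV exE exS exg exc"
proof -
  have ac: "acyclic exE" unfolding acyclic_def
  proof (intro allI notI)
    fix x assume "(x, x) \<in> exE\<^sup>+"
    then have "(x, x) \<in> {(0,1),(0,2),(0,3),(1,3),(2,3)}" using ex_trancl by blast
    then show False by auto
  qed
  have src: "\<exists>!x. x \<in> exV \<and> (\<forall>u. (u, x) \<notin> exE)"
  proof (rule ex1I[of _ "0::nat"])
    show "(0::nat) \<in> exV \<and> (\<forall>u. (u, 0::nat) \<notin> exE)" by (simp add: exV_def exE_def)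
  next
    fix y assume y: "y \<in> exV \<and> (\<forall>u. (u, y) \<notin> exE)"
    have "(0,1) \<in> exE" "(0,2) \<in> exE" "(1,3) \<in> exE" by (simp_all add: exE_def)
    moreover have "y = 0 \<or> y = 1 \<or> y = 2 \<or> y = 3" using y by (simp add: exV_def)
    ultimately show "y = 0" using y by metis
  qed
  have snk: "\<exists>!x. x \<in> exV \<and> (\<forall>u. (x, u) \<notin> exE)"
  proof (rule ex1I[of _ "3::nat"])
    show "(3::nat) \<in> exV \<and> (\<forall>u. (3::nat, u) \<notin> exE)" by (simp add: exV_def exE_def)
  next
    fix y assume y: "y \<in> exV \<and> (\<forall>u. (y, u) \<notin> exE)"
    have "(0,1) \<in> exE" "(2,3) \<in> exE" "(1,3) \<in> exE" by (simp_all add: exE_def)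
    moreover have "y = 0 \<or> y = 1 \<or> y = 2 \<or> y = 3" using y by (simp add: exV_def)
    ultimately show "y = 3" using y by metis
  qed
  have "finite exV" "exE \<subseteq> exV \<times> exV" "finite exS" "exg ` exV \<subseteq> exS" "\<forall>v\<in>exV. exc v \<ge> 0"
    by (auto simp: exV_def exE_def exS_def exg_def exc_def)
  then show ?thesis unfolding typed_dag_def using ac src snk by blast
qed

lemma ex_b1: "new_b1 exV exE exS exg exc exM = 2"
proof -
  have ch: "chat exg exc exM = (\<lambda>_. 0)" by (auto simp: chat_def exM_def)
  have "{len (chat exg exc exM) \<pi> | \<pi>. is_path exV exE \<pi>} = {0}"
    using path_nonempty[OF ex_dag] by (auto simp: ch len_def)
  then have "len_hat exV exE exg exc exM = 0" unfolding len_hat_def by simp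
  moreover have "{u \<in> exV. exg u = 0} = {0,1,3}" by (auto simp: exV_def exg_def)
  moreover have "{u \<in> exV. exg u = 1} = {2}" by (auto simp: exV_def exg_def)
  ultimately show ?thesis unfolding new_b1_def vol_def
    by (simp add: exS_def exM_def exc_def)
qed

lemma ex_path:
  assumes p: "is_path exV exE \<pi>"
  shows "len exc \<pi> + (\<Sum>s\<in>exS. \<Sum>v\<in>ivs exV exE exg \<pi> s. exc v / real (exM s)) \<le> 1"
proof -
  have ac: "acyclic exE" using ex_dag unfolding typed_dag_def by simp
  have PV: "set \<pi> \<subseteq> exV" using p unfolding is_path_def by simp
  have par: "par exV exE exg v = {}" if "v \<in> exV" for v
  proof -
    have "(0,1) \<in> exE\<^sup>+" "(0,2) \<in> exE\<^sup>+" "(1,3) \<in> exE\<^sup>+" "(2,3) \<in> exE\<^sup>+"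
      by (auto simp: exE_def)
    moreover have "(0,3) \<in> exE\<^sup>+" using \<open>(0,1) \<in> exE\<^sup>+\<close> \<open>(1,3) \<in> exE\<^sup>+\<close> by (rule trancl_trans)
    ultimately show ?thesis using that
      by (auto simp: par_def exV_def exg_def ans_def des_def)
  qed
  have ivs: "ivs exV exE exg \<pi> s = {}" for s
    unfolding ivs_def using par PV nth_mem by fastforce
  have not12: "\<not> (1 \<in> set \<pi> \<and> 2 \<in> set \<pi>)"
  proof
    assume "1 \<in> set \<pi> \<and> 2 \<in> set \<pi>"
    then obtain i j where ij: "i < length \<pi>" "j < length \<pi>" "\<pi>!i = 1" "\<pi>!j = 2"
      by (auto simp: in_set_conv_nth)
    have "i < j \<or> j < i" using ij by (cases "i = j") auto
    then have "(1::nat,2::nat) \<in> exE\<^sup>+ \<or> (2::nat,1::nat) \<in> exE\<^sup>+"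
      using path_trancl[OF p] ij by metis
    then show False using ex_trancl by auto
  qed
  have cnn: "\<forall>v. exc v \<ge> 0" by (simp add: exc_def)
  have "len exc \<pi> = (\<Sum>x\<in>set \<pi>. exc x)" using len_set[OF path_distinct[OF p ac]] .
  also have "\<dots> \<le> 1"
  proof (cases "1 \<in> set \<pi>")
    case True
    then have "set \<pi> \<subseteq> {0,1,3}" using not12 PV by (auto simp: exV_def)
    then have "(\<Sum>x\<in>set \<pi>. exc x) \<le> (\<Sum>x\<in>{0,1,3}. exc x)" using cnn by (intro sum_mono2) auto
    then show ?thesis by (simp add: exc_def)
  next
    case False
    then have "set \<pi> \<subseteq> {0,2,3}" using PV by (auto simp: exV_def)
    then have "(\<Sum>x\<in>set \<pi>. exc x) \<le> (\<Sum>x\<in>{0,2,3}. exc x)" using cnn by (intro sum_mono2) auto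
    then show ?thesis by (simp add: exc_def)
  qed
  finally show ?thesis by (simp add: ivs)
qed

lemma ex_b2: "new_b2 exV exE exS exg exc exM \<le> 1"
proof -
  have fV: "finite exV" and ac: "acyclic exE" using ex_dag unfolding typed_dag_def by auto
  show ?thesis unfolding new_b2_def
    using paths_finite[OF fV ac] path_nonempty[OF ex_dag] ex_path
    by (subst Max_le_iff) auto
qed

theorem corollary3:
  shows "(\<forall>(V :: 'v set) E (S :: 's set) \<gamma> c M.
            typed_dag V E S \<gamma> c \<and> (\<forall>s\<in>S. M s \<ge> 1) \<longrightarrow>
            new_b2 V E S \<gamma> c M \<le> new_b1 V E S \<gamma> c M)
       \<and> (\<exists>(V :: nat set) E (S :: nat set) \<gamma> c M.
            typed_dag V E S \<gamma> c \<and> (\<forall>s\<in>S. M s \<ge> 1) \<and>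
            new_b2 V E S \<gamma> c M < new_b1 V E S \<gamma> c M)"
proof
  show "\<forall>(V :: 'v set) E (S :: 's set) \<gamma> c M.
            typed_dag V E S \<gamma> c \<and> (\<forall>s\<in>S. M s \<ge> 1) \<longrightarrow>
            new_b2 V E S \<gamma> c M \<le> new_b1 V E S \<gamma> c M"
    using part1 by blast
  have "typed_dag exV exE exS exg exc \<and> (\<forall>s\<in>exS. exM s \<ge> 1) \<and>
            new_b2 exV exE exS exg exc exM < new_b1 exV exE exS exg exc exM"
    using ex_dag ex_b1 ex_b2 by (simp add: exM_def)
  then show "\<exists>(V :: nat set) E (S :: nat set) \<gamma> c M.
            typed_dag V E S \<gamma> c \<and> (\<forall>s\<in>S. M s \<ge> 1) \<and>
            new_b2 V E S \<gamma> c M < new_b1 V E S \<gamma> c M" by blast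
qed

end
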